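(* Let $A\subsetneq\mathbb{R}^n$ be an affine subspace defined by linear equations with integer coefficients, and let $A_{\ge}$ be a closed half-space in $A$ defined by a non-strict linear inequality with integer coefficients. Then $A_{\ge}$ is a tropical prevariety in $\mathbb{R}^n$.
   Context: A tropical polynomial $f$ in $n$ variables is a function $f(x)=\min\{L_1(x),\dots,L_m(x)\}$ on $\mathbb{R}^n$, where each $L_j(x)=\sum_{i=1}^n a_{ji}x_i+b_j$ has non-negative integer coefficients $a_{ji}$ and real constant term $b_j$. The tropical hypersurface $V(f)$ is the set of points where this piecewise-linear function is not smooth. A tropical prevariety is a set of the form $V(f_1)\cap\cdots\cap V(f_k)$ for finitely many tropical polynomials $f_1,\dots,f_k$. *)

theory Defs
  imports "HOL-Analysis.Analysis"
begin

text \<open>A tropical polynomial in n variables (n = CARD('n)) is a finite nonempty set of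
  terms (a, b), with exponent vector a of non-negative integers and real constant b;
  it denotes the function x \<mapsto> min over its terms of a \<bullet> x + b.\<close>

definition tropical_polynomial :: "((nat^'n) \<times> real) set \<Rightarrow> bool" where
  "tropical_polynomial f \<longleftrightarrow> finite f \<and> f \<noteq> {}"

definition trop_eval :: "((nat^'n) \<times> real) set \<Rightarrow> real^'n \<Rightarrow> real" where
  "trop_eval f x = Min ((\<lambda>(a, b). (\<Sum>i\<in>UNIV. real (a $ i) * x $ i) + b) ` f)"

definition trop_hypersurface :: "((nat^'n) \<times> real) set \<Rightarrow> (real^'n) set" where
  "trop_hypersurface f = {x. \<not> (trop_eval f differentiable (at x))}"

definition tropical_prevariety :: "(real^'n) set \<Rightarrow> bool" where
  "tropical_prevariety S \<longleftrightarrow>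
     (\<exists>F. finite F \<and> (\<forall>f\<in>F. tropical_polynomial f) \<and> S = (\<Inter>f\<in>F. trop_hypersurface f))"

definition int_lin :: "int^'n \<Rightarrow> real^'n \<Rightarrow> real" where
  "int_lin a x = (\<Sum>i\<in>UNIV. real_of_int (a $ i) * x $ i)"

end

theory Submission
  imports Defs
begin

definition lf :: "nat^'n \<Rightarrow> real \<Rightarrow> real^'n \<Rightarrow> real" where
  "lf a b x = (\<Sum>i\<in>UNIV. real (a $ i) * x $ i) + b"

lemma vec_nth_deriv: "((\<lambda>x::real^'n. x $ i) has_derivative (\<lambda>x. x $ i)) F"
  by (rule bounded_linear.has_derivative[OF bounded_linear_vec_nth has_derivative_ident])

lemma lin_deriv: "((\<lambda>y::real^'n. \<Sum>i\<in>UNIV. real (a $ i) * y $ i) has_derivative (\<lambda>y. \<Sum>i\<in>UNIV. real (a $ i) * y $ i)) (at x)"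
  by (auto intro!: derivative_eq_intros vec_nth_deriv)

lemma lf_deriv: "(lf a b has_derivative (\<lambda>y. \<Sum>i\<in>UNIV. real (a $ i) * y $ i)) (at x)"
  unfolding lf_def by (auto intro!: derivative_eq_intros vec_nth_deriv)

lemma lf_cont: "continuous_on UNIV (lf a b)"
  unfolding lf_def by (intro continuous_intros)

lemma trop_eval_alt: "trop_eval f x = Min ((\<lambda>p. lf (fst p) (snd p) x) ` f)"
  unfolding trop_eval_def lf_def by (simp add: case_prod_unfold)

lemma trop_eval_le: "finite f \<Longrightarrow> p \<in> f \<Longrightarrow> trop_eval f x \<le> lf (fst p) (snd p) x"
  unfolding trop_eval_alt by (rule Min_le) auto

lemma trop_eval_eq: "finite f \<Longrightarrow> p \<in> f \<Longrightarrow> (\<forall>q\<in>f. lf (fst p) (snd p) x \<le> lf (fst q) (snd q) x)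
   \<Longrightarrow> trop_eval f x = lf (fst p) (snd p) x"
  unfolding trop_eval_alt by (intro antisym Min_le Min.boundedI) auto

lemma deriv_is_lin:
  assumes "finite f" "(a, b) \<in> f" "trop_eval f x = lf a b x"
    and D: "(trop_eval f has_derivative D) (at x)"
  shows "D = (\<lambda>y. \<Sum>i\<in>UNIV. real (a $ i) * y $ i)"
proof -
  let ?g = "\<lambda>y. trop_eval f y - lf a 0 y"
  have "(?g has_derivative (\<lambda>y. D y - (\<Sum>i\<in>UNIV. real (a $ i) * y $ i))) (at x)"
    by (rule has_derivative_diff[OF D lf_deriv])
  moreover have "\<forall>y\<in>UNIV. ?g y \<le> ?g x"
  proof
    fix y
    have "trop_eval f y \<le> lf a b y" using trop_eval_le[OF assms(1,2)] by simp
    then show "?g y \<le> ?g x" using assms(3) by (simp add: lf_def)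
  qed
  ultimately have "(\<lambda>y. D y - (\<Sum>i\<in>UNIV. real (a $ i) * y $ i)) = (\<lambda>v. 0)"
    by (intro differential_zero_maxmin[where S=UNIV and x=x]) auto
  then show ?thesis by (metis (no_types, lifting) eq_iff_diff_eq_0)
qed

lemma nondiff:
  assumes "finite f" "(a1, b1) \<in> f" "(a2, b2) \<in> f" "a1 \<noteq> a2"
    "trop_eval f x = lf a1 b1 x" "trop_eval f x = lf a2 b2 x"
  shows "\<not> trop_eval f differentiable (at x)"
proof
  assume "trop_eval f differentiable (at x)"
  then obtain D where D: "(trop_eval f has_derivative D) (at x)"
    unfolding differentiable_def by blast
  have 1: "D = (\<lambda>y. \<Sum>i\<in>UNIV. real (a1 $ i) * y $ i)" using deriv_is_lin[OF assms(1,2,5) D] .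
  have 2: "D = (\<lambda>y. \<Sum>i\<in>UNIV. real (a2 $ i) * y $ i)" using deriv_is_lin[OF assms(1,3,6) D] .
  obtain i where i: "a1 $ i \<noteq> a2 $ i" using assms(4) by (auto simp: vec_eq_iff)
  have "(\<Sum>j\<in>UNIV. real (a1 $ j) * axis i 1 $ j) = (\<Sum>j\<in>UNIV. real (a2 $ j) * axis i (1::real) $ j)"
    using 1 2 by metis
  then show False using i by (simp add: axis_def if_distrib cong: if_cong)
qed

lemma smooth:
  assumes "finite f" "p \<in> f" "\<forall>q\<in>f. q \<noteq> p \<longrightarrow> lf (fst p) (snd p) x < lf (fst q) (snd q) x"
  shows "trop_eval f differentiable (at x)"
proof -
  let ?U = "\<Inter>q\<in>f - {p}. {y. lf (fst p) (snd p) y < lf (fst q) (snd q) y}"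
  have op: "open ?U"
    using assms(1) by (intro open_INT open_Collect_less) (auto intro!: open_Collect_less lf_cont)
  have xU: "x \<in> ?U" using assms(3) by auto
  have eq: "lf (fst p) (snd p) y = trop_eval f y" if "y \<in> ?U" for y
  proof (rule trop_eval_eq[symmetric, OF assms(1,2)])
    show "\<forall>q\<in>f. lf (fst p) (snd p) y \<le> lf (fst q) (snd q) y"
    proof
      fix q assume "q \<in> f"
      then show "lf (fst p) (snd p) y \<le> lf (fst q) (snd q) y"
      proof (cases "q = p")
        case False
        with \<open>q \<in> f\<close> have "q \<in> f - {p}" by simp
        with that have "y \<in> {y. lf (fst p) (snd p) y < lf (fst q) (snd q) y}" by (rule INT_D)
        then show ?thesis by simp
      qed simp
    qed
  qed
  show ?thesis unfolding differentiable_def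
    using has_derivative_transform_within_open[OF lf_deriv op xU eq] by blast
qed

definition posv :: "int^'n \<Rightarrow> nat^'n" where "posv a = (\<chi> i. nat (a $ i))"
definition negv :: "int^'n \<Rightarrow> nat^'n" where "negv a = (\<chi> i. nat (- (a $ i)))"

lemma int_lin_split: "int_lin a x = lf (posv a) 0 x - lf (negv a) 0 x"
proof -
  have "real_of_int (a $ i) * x $ i = real (nat (a $ i)) * x $ i - real (nat (- (a $ i))) * x $ i" for i
    by (cases "a $ i \<ge> 0") (auto simp: left_diff_distrib[symmetric])
  then show ?thesis
    unfolding int_lin_def lf_def posv_def negv_def by (simp add: sum_subtractf[symmetric])
qed

lemma lf_add: "lf (u + v) e x = lf u 0 x + lf v e x"
  unfolding lf_def by (simp add: distrib_right sum.distrib)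

lemma posv_neq: "a \<noteq> 0 \<Longrightarrow> posv a \<noteq> negv a"
proof -
  assume "a \<noteq> 0"
  then obtain i where i: "a $ i \<noteq> 0" by (auto simp: vec_eq_iff)
  hence "nat (a $ i) \<noteq> nat (- (a $ i))" by (cases "a $ i > 0") auto
  then show ?thesis unfolding posv_def negv_def by (auto simp: vec_eq_iff)
qed

lemma hyp:
  assumes "a \<noteq> 0"
  shows "trop_hypersurface {(posv a, 0), (negv a, c)} = {x. int_lin a x = c}"
proof -
  let ?f = "{(posv a, 0), (negv a, c)}"
  have fin: "finite ?f" by simp
  have "x \<in> trop_hypersurface ?f \<longleftrightarrow> int_lin a x = c" for x
  proof -
    have e: "int_lin a x - c = lf (posv a) 0 x - lf (negv a) c x"
      using int_lin_split[of a x] by (simp add: lf_def)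
    consider "int_lin a x = c" | "int_lin a x < c" | "int_lin a x > c" by linarith
    then show ?thesis
    proof cases
      case 1
      have "trop_eval ?f x = lf (fst (posv a, 0::real)) (snd (posv a, 0::real)) x"
        using e 1 by (intro trop_eval_eq) auto
      moreover have "trop_eval ?f x = lf (fst (negv a, c)) (snd (negv a, c)) x"
        using e 1 by (intro trop_eval_eq) auto
      ultimately have "\<not> trop_eval ?f differentiable (at x)"
        using nondiff[OF fin _ _ posv_neq[OF assms], of 0 c x] by simp
      then show ?thesis using 1 by (simp add: trop_hypersurface_def)
    next
      case 2
      have "trop_eval ?f differentiable (at x)"
        using e 2 by (intro smooth[OF fin, of "(posv a, 0)"]) auto
      then show ?thesis using 2 by (simp add: trop_hypersurface_def)
    next
      case 3
      have "trop_eval ?f differentiable (at x)"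
        using e 3 by (intro smooth[OF fin, of "(negv a, c)"]) auto
      then show ?thesis using 3 by (simp add: trop_hypersurface_def)
    qed
  qed
  then show ?thesis by auto
qed

theorem lemma1p1:
  fixes E :: "((int^'n) \<times> real) set"
    and A :: "(real^'n) set"
    and b :: "int^'n" and d :: real
  assumes "finite E"
    and A_def: "A = {x. \<forall>(a, c)\<in>E. int_lin a x = c}"
    and "A \<noteq> UNIV"
    and "A \<noteq> {}"
    and "\<exists>x\<in>A. \<exists>y\<in>A. int_lin b x \<noteq> int_lin b y"
  shows "tropical_prevariety {x\<in>A. int_lin b x \<ge> d}"
proof -
  define E' where "E' = {p \<in> E. fst p \<noteq> 0}"
  obtain x0 where x0: "x0 \<in> A" using assms(4) by blast
  have A': "A = {x. \<forall>(a, c)\<in>E'. int_lin a x = c}"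
  proof -
    have z: "int_lin a x = c" if "(a, c) \<in> E" "a = 0" for a c x
    proof -
      have "int_lin a x0 = c" using x0 that(1) A_def by auto
      then show ?thesis using that(2) by (simp add: int_lin_def)
    qed
    have "(\<forall>(a, c)\<in>E. int_lin a x = c) \<longleftrightarrow> (\<forall>(a, c)\<in>E'. int_lin a x = c)" for x
    proof
      assume "\<forall>(a, c)\<in>E'. int_lin a x = c"
      then show "\<forall>(a, c)\<in>E. int_lin a x = c"
        unfolding E'_def using z by (metis (mono_tags, lifting) case_prodI2 fst_conv mem_Collect_eq)
    qed (auto simp: E'_def)
    then show ?thesis unfolding A_def by auto
  qed
  obtain a0 c0 where ac0: "(a0, c0) \<in> E'"
    using assms(3) A' by auto
  have a0: "a0 \<noteq> 0" using ac0 by (simp add: E'_def)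
  define h where "h = (\<lambda>(a::int^'n, c::real). {(posv a, 0::real), (negv a, c)})"
  define g where "g = {(posv a0 + negv b, 0::real), (negv a0 + negv b, c0), (posv a0 + posv b, - d)}"
  define F where "F = h ` E' \<union> {g}"
  have finF: "finite F" using assms(1) unfolding F_def E'_def by simp
  have tpF: "\<forall>f\<in>F. tropical_polynomial f"
    unfolding F_def h_def g_def tropical_polynomial_def by auto
  have hyps: "(\<Inter>f\<in>h ` E'. trop_hypersurface f) = A"
  proof -
    have "trop_hypersurface (h p) = {x. int_lin (fst p) x = snd p}" if "p \<in> E'" for p
      using that hyp[of "fst p" "snd p"] unfolding h_def E'_def by (auto simp: case_prod_unfold)
    then show ?thesis unfolding A' by (auto simp: case_prod_unfold; force)
  qed
  have gA: "x \<in> trop_hypersurface g \<longleftrightarrow> int_lin b x \<ge> d" if "x \<in> A" for x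
  proof -
    have fing: "finite g" unfolding g_def by simp
    have ia: "int_lin a0 x = c0" using that ac0 A' by auto
    define \<alpha> where "\<alpha> = lf (posv a0) 0 x"
    define \<beta> where "\<beta> = lf (negv b) 0 x"
    have P: "lf (posv a0 + negv b) 0 x = \<alpha> + \<beta>" unfolding \<alpha>_def \<beta>_def by (simp add: lf_add)
    have Q: "lf (negv a0 + negv b) c0 x = \<alpha> + \<beta>"
      using int_lin_split[of a0 x] ia unfolding \<alpha>_def \<beta>_def lf_add by (simp add: lf_def)
    have R: "lf (posv a0 + posv b) (-d) x = \<alpha> + \<beta> + int_lin b x - d"
      using int_lin_split[of b x] unfolding \<alpha>_def \<beta>_def lf_add by (simp add: lf_def)
    have ne: "posv a0 + negv b \<noteq> negv a0 + negv b"
      using posv_neq[OF a0] by (auto simp: vec_eq_iff)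
    show ?thesis
    proof (cases "int_lin b x \<ge> d")
      case True
      have "trop_eval g x = lf (fst (posv a0 + negv b, 0::real)) (snd (posv a0 + negv b, 0::real)) x"
        using P Q R True by (intro trop_eval_eq[OF fing]) (auto simp: g_def)
      moreover have "trop_eval g x = lf (fst (negv a0 + negv b, c0)) (snd (negv a0 + negv b, c0)) x"
        using P Q R True by (intro trop_eval_eq[OF fing]) (auto simp: g_def)
      ultimately have "\<not> trop_eval g differentiable (at x)"
        using nondiff[OF fing _ _ ne, of 0 c0 x] by (simp add: g_def)
      then show ?thesis using True by (simp add: trop_hypersurface_def)
    next
      case False
      have "trop_eval g differentiable (at x)"
        using P Q R False by (intro smooth[OF fing, of "(posv a0 + posv b, - d)"]) (auto simp: g_def)
      then show ?thesis using False by (simp add: trop_hypersurface_def)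
    qed
  qed
  have "{x\<in>A. int_lin b x \<ge> d} = (\<Inter>f\<in>F. trop_hypersurface f)"
    unfolding F_def using hyps gA by auto
  then show ?thesis unfolding tropical_prevariety_def using finF tpF by blast
qed

end
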